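(* For an integer $z\ge1$ let $$\varphi_z(v)=\frac{1-\frac{4q^2-h^z}{2q(1-2q)}(e^v-1)}{1-\frac{2q-h^z}{1-2q}(e^v-1)},\qquad \psi_z(v)=\frac{e^v}{1-\frac{2q-h^z}{1-2q}(e^v-1)},$$ and $m_z=h^z/(2q)$. For $\log(1-2q(1-2q))<v<\log(1+2q(1-2q))$ we have $$\varphi_z(v)=\exp\big(m_z(v+O(v^2))\big),\qquad v\to0,$$ where the $O(v^2)$ term is uniform in $z\ge1$, and $$\psi_z(v)\le\frac{1+|e^v-1|}{1-\frac{|e^v-1|}{1-2q}}.$$
   Context: Let $0<q<p<1$ with $p+q=1$ and $h=q/p$. *)

theory Defs
  imports Complex_Main
begin

definition hh :: "real \<Rightarrow> real \<Rightarrow> real" where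
  "hh p q = q / p"

definition phi :: "real \<Rightarrow> real \<Rightarrow> nat \<Rightarrow> real \<Rightarrow> real" where
  "phi p q z v =
     (1 - (4 * q^2 - hh p q ^ z) / (2 * q * (1 - 2 * q)) * (exp v - 1)) /
     (1 - (2 * q - hh p q ^ z) / (1 - 2 * q) * (exp v - 1))"

definition psi :: "real \<Rightarrow> real \<Rightarrow> nat \<Rightarrow> real \<Rightarrow> real" where
  "psi p q z v = exp v / (1 - (2 * q - hh p q ^ z) / (1 - 2 * q) * (exp v - 1))"

definition mz :: "real \<Rightarrow> real \<Rightarrow> nat \<Rightarrow> real" where
  "mz p q z = hh p q ^ z / (2 * q)"

end

theory Submission
  imports Defs
begin

lemma exp_m1_bound:
  fixes v :: real assumes "\<bar>v\<bar> \<le> 1/2"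
  shows "\<bar>exp v - 1\<bar> \<le> 2 * \<bar>v\<bar>"
proof (cases "0 \<le> v")
  case True
  then have "exp v \<le> 1 + 2*v" using real_exp_bound_lemma assms by auto
  moreover have "1 \<le> exp v" using True by simp
  ultimately show ?thesis using True by auto
next
  case False
  have "1 + v \<le> exp v" by (rule exp_ge_add_one_self)
  moreover have "exp v \<le> 1" using False by simp
  ultimately have "\<bar>exp v - 1\<bar> = 1 - exp v" "1 - exp v \<le> - v" by linarith+
  then show ?thesis using False by linarith
qed

lemma key_bound:
  fixes m M b B x :: real
  assumes m: "0 < m" "m \<le> M" and b: "0 \<le> b" "b \<le> B"
    and x: "\<bar>x\<bar> \<le> 1/2" "\<bar>b*x\<bar> \<le> 1/2" "m*\<bar>x\<bar> \<le> 1/4"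
  shows "\<bar>ln (1 + m*x/(1-b*x))/m - ln (1+x)\<bar> \<le> (8*M + 2*B + 2) * x^2"
proof -
  define d where "d = 1 - b*x"
  have d: "d \<ge> 1/2" using x(2) unfolding d_def by auto
  define u where "u = m*x/d"
  have au: "\<bar>u\<bar> = m*\<bar>x\<bar>/d" using m d unfolding u_def by (simp add: abs_mult)
  have "m*\<bar>x\<bar>/d \<le> m*\<bar>x\<bar>/(1/2)" using d m by (intro divide_left_mono) auto
  then have "m*\<bar>x\<bar>/d \<le> 2*(m*\<bar>x\<bar>)" by simp
  then have u2: "\<bar>u\<bar> \<le> 2*m*\<bar>x\<bar>" using au by simp
  have uh: "\<bar>u\<bar> \<le> 1/2" using u2 x(3) by simp
  have e1: "\<bar>ln (1+u) - u\<bar> \<le> 2*u^2" by (rule abs_ln_one_plus_x_minus_x_bound[OF uh])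
  have "u^2 \<le> (2*m*\<bar>x\<bar>)^2" using u2
    by (metis abs_ge_zero power2_abs power_mono)
  then have "\<bar>ln (1+u) - u\<bar> \<le> 8*m^2*x^2" using e1 by (simp add: power_mult_distrib)
  then have t1: "\<bar>(ln (1+u) - u)/m\<bar> \<le> 8*m*x^2" using m
    by (simp add: divide_le_eq power2_eq_square mult_ac)
  have t1': "8*m*x^2 \<le> 8*M*x^2" using m by (simp add: mult_right_mono)
  have "u/m - x = b*x^2/d" unfolding u_def d_def using m d unfolding d_def
    by (simp add: field_simps power2_eq_square)
  moreover have "\<bar>b*x^2/d\<bar> \<le> 2*B*x^2"
  proof -
    have "\<bar>b*x^2/d\<bar> = b*x^2/d" using b d by simp
    also have "\<dots> \<le> b*x^2/(1/2)" using d b by (intro divide_left_mono) auto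
    also have "\<dots> = 2*(b*x^2)" by simp
    also have "\<dots> \<le> 2*B*x^2" using b by (simp add: mult_right_mono)
    finally show ?thesis .
  qed
  ultimately have t2: "\<bar>u/m - x\<bar> \<le> 2*B*x^2" by simp
  have t3: "\<bar>ln (1+x) - x\<bar> \<le> 2*x^2" by (rule abs_ln_one_plus_x_minus_x_bound[OF x(1)])
  have "ln (1+u)/m - ln (1+x) = (ln (1+u) - u)/m + (u/m - x) - (ln (1+x) - x)"
    using m by (simp add: field_simps)
  then have "\<bar>ln (1+u)/m - ln (1+x)\<bar> \<le> 8*M*x^2 + 2*B*x^2 + 2*x^2"
    using t1 t1' t2 t3 by linarith
  then show ?thesis unfolding u_def d_def by (simp add: algebra_simps)
qed

theorem lemma7p1:
  fixes p q :: real
  assumes "0 < q" "q < p" "p < 1" "p + q = 1"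
  shows "(\<exists>C \<delta>. \<delta> > 0 \<and>
            (\<forall>z::nat. \<forall>v::real. z \<ge> 1 \<longrightarrow>
               ln (1 - 2*q*(1 - 2*q)) < v \<longrightarrow> v < ln (1 + 2*q*(1 - 2*q)) \<longrightarrow>
               \<bar>v\<bar> < \<delta> \<longrightarrow>
               (\<exists>r. \<bar>r\<bar> \<le> C * v^2 \<and> phi p q z v = exp (mz p q z * (v + r)))))
       \<and> (\<forall>z::nat. \<forall>v::real. z \<ge> 1 \<longrightarrow>
               ln (1 - 2*q*(1 - 2*q)) < v \<longrightarrow> v < ln (1 + 2*q*(1 - 2*q)) \<longrightarrow>
               psi p q z v \<le> (1 + \<bar>exp v - 1\<bar>) / (1 - \<bar>exp v - 1\<bar> / (1 - 2*q)))"
proof -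
  have q2: "2*q < 1" using assms by auto
  define h where "h = hh p q"
  have h: "0 < h" "h < 1" using assms unfolding h_def hh_def by auto
  have hq: "h < 2*q"
  proof -
    have "p > 1/2" using assms by simp
    then have "q*1 < q*(2*p)" using assms by (intro mult_strict_left_mono) auto
    then have "q < 2*q*p" by simp
    then show ?thesis using assms unfolding h_def hh_def by (simp add: divide_less_eq mult_ac)
  qed
  have hz: "\<And>z::nat. z \<ge> 1 \<Longrightarrow> 0 < h^z \<and> h^z \<le> h"
    using h power_decreasing[of 1 _ h] by auto
  define B where "B = 2*q/(1-2*q)"
  define M where "M = 1/(2*p)"
  have B0: "0 \<le> B" using q2 assms unfolding B_def by simp
  have M0: "0 \<le> M" using assms unfolding M_def by simp
  define K where "K = 8*M + 2*B + 2"
  define \<delta> where "\<delta> = min (1/4) (min (1/(4*(B+1))) (1/(8*(M+1))))"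
  have part1: "\<forall>z::nat. \<forall>v::real. z \<ge> 1 \<longrightarrow>
               ln (1 - 2*q*(1 - 2*q)) < v \<longrightarrow> v < ln (1 + 2*q*(1 - 2*q)) \<longrightarrow>
               \<bar>v\<bar> < \<delta> \<longrightarrow>
               (\<exists>r. \<bar>r\<bar> \<le> (4*K) * v^2 \<and> phi p q z v = exp (mz p q z * (v + r)))"
  proof (intro allI impI)
    fix z :: nat and v :: real
    assume z: "z \<ge> 1" and vd: "\<bar>v\<bar> < \<delta>"
    define x where "x = exp v - 1"
    define m where "m = mz p q z"
    define b where "b = (2 * q - h ^ z) / (1 - 2 * q)"
    have hzz: "0 < h^z" "h^z \<le> h" using hz[OF z] by auto
    have m0: "0 < m" using hzz assms unfolding m_def mz_def h_def by simp
    have mM: "m \<le> M"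
    proof -
      have "m \<le> h/(2*q)" using hzz assms unfolding m_def mz_def h_def
        by (simp add: divide_right_mono)
      also have "h/(2*q) = M" unfolding h_def hh_def M_def using assms by simp
      finally show ?thesis .
    qed
    have b0: "0 \<le> b" using hzz hq q2 unfolding b_def by simp
    have bB: "b \<le> B" using hzz q2 unfolding b_def B_def by (simp add: divide_right_mono)
    have vh: "\<bar>v\<bar> \<le> 1/2" using vd unfolding \<delta>_def by auto
    have xv: "\<bar>x\<bar> \<le> 2*\<bar>v\<bar>" unfolding x_def by (rule exp_m1_bound[OF vh])
    have x1: "\<bar>x\<bar> \<le> 1/2" using xv vd unfolding \<delta>_def by auto
    have "(B+1)*\<bar>x\<bar> \<le> (B+1)*(2*\<delta>)" using xv vd B0
      by (intro mult_left_mono) auto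
    also have "(B+1)*(2*\<delta>) \<le> (B+1)*(2*(1/(4*(B+1))))" using B0 unfolding \<delta>_def
      by (intro mult_left_mono) auto
    also have "\<dots> = 1/2" using B0 by (simp add: field_simps)
    finally have "(B+1)*\<bar>x\<bar> \<le> 1/2" .
    moreover have "\<bar>b*x\<bar> \<le> (B+1)*\<bar>x\<bar>"
    proof -
      have "\<bar>b*x\<bar> = b*\<bar>x\<bar>" using b0 by (simp add: abs_mult)
      also have "\<dots> \<le> (B+1)*\<bar>x\<bar>" using bB by (intro mult_right_mono) auto
      finally show ?thesis .
    qed
    ultimately have x2: "\<bar>b*x\<bar> \<le> 1/2" by linarith
    have "(M+1)*\<bar>x\<bar> \<le> (M+1)*(2*\<delta>)" using xv vd M0
      by (intro mult_left_mono) auto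
    also have "(M+1)*(2*\<delta>) \<le> (M+1)*(2*(1/(8*(M+1))))" using M0 unfolding \<delta>_def
      by (intro mult_left_mono) auto
    also have "\<dots> = 1/4" using M0 by (simp add: field_simps)
    finally have "(M+1)*\<bar>x\<bar> \<le> 1/4" .
    moreover have "m*\<bar>x\<bar> \<le> (M+1)*\<bar>x\<bar>" using mM by (intro mult_right_mono) auto
    ultimately have x3: "m*\<bar>x\<bar> \<le> 1/4" by linarith
    have kb: "\<bar>ln (1 + m*x/(1-b*x))/m - ln (1+x)\<bar> \<le> K * x^2"
      unfolding K_def by (rule key_bound[OF m0 mM b0 bB x1 x2 x3])
    have lx: "ln (1+x) = v" unfolding x_def by simp
    define r where "r = ln (1 + m*x/(1-b*x))/m - v"
    have "K * x^2 \<le> K * (4*v^2)"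
    proof -
      have "x^2 \<le> (2*\<bar>v\<bar>)^2" using xv by (metis abs_ge_zero power2_abs power_mono)
      then show ?thesis using B0 M0 unfolding K_def by (intro mult_left_mono) (auto simp: power_mult_distrib)
    qed
    then have rb: "\<bar>r\<bar> \<le> (4*K)*v^2" using kb lx unfolding r_def by simp
    have d: "1 - b*x > 0" using x2 by auto
    have ucond: "\<bar>m*x/(1-b*x)\<bar> \<le> 1/2"
    proof -
      have "\<bar>m*x/(1-b*x)\<bar> = m*\<bar>x\<bar>/(1-b*x)" using m0 d by (simp add: abs_mult)
      also have "\<dots> \<le> m*\<bar>x\<bar>/(1/2)" using d x2 m0
        by (intro divide_left_mono) auto
      also have "\<dots> = 2*(m*\<bar>x\<bar>)" by simp
      finally show ?thesis using x3 by linarith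
    qed
    then have upos: "1 + m*x/(1-b*x) > 0" using abs_le_iff[of "m*x/(1-b*x)" "1/2"] by linarith
    have a_eq: "(4 * q^2 - h ^ z) / (2 * q * (1 - 2 * q)) = b - m"
      unfolding b_def m_def mz_def h_def[symmetric] using assms(1) q2
      by (simp add: field_simps power2_eq_square)
    have phi_eq: "phi p q z v = 1 + m*x/(1-b*x)"
      unfolding phi_def h_def[symmetric] x_def[symmetric] a_eq b_def[symmetric]
      using d by (simp add: field_simps)
    have "exp (m * (v + r)) = exp (ln (1 + m*x/(1-b*x)))"
      unfolding r_def using m0 by simp
    also have "\<dots> = 1 + m*x/(1-b*x)" using upos by simp
    finally have "phi p q z v = exp (mz p q z * (v + r))" using phi_eq unfolding m_def by simp
    then show "\<exists>r. \<bar>r\<bar> \<le> (4*K) * v^2 \<and> phi p q z v = exp (mz p q z * (v + r))"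
      using rb by blast
  qed
  have part2: "\<forall>z::nat. \<forall>v::real. z \<ge> 1 \<longrightarrow>
               ln (1 - 2*q*(1 - 2*q)) < v \<longrightarrow> v < ln (1 + 2*q*(1 - 2*q)) \<longrightarrow>
               psi p q z v \<le> (1 + \<bar>exp v - 1\<bar>) / (1 - \<bar>exp v - 1\<bar> / (1 - 2*q))"
  proof (intro allI impI)
    fix z :: nat and v :: real
    assume z: "z \<ge> 1" and l: "ln (1 - 2*q*(1 - 2*q)) < v" and u: "v < ln (1 + 2*q*(1 - 2*q))"
    define s where "s = 2*q*(1-2*q)"
    have s0: "0 < s" using assms q2 unfolding s_def by simp
    have s1: "s < 1 - 2*q" using assms q2 unfolding s_def by simp
    have s2: "s < 1" using s1 assms by simp
    have "exp (ln (1 - s)) < exp v" using l unfolding s_def by simp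
    then have e1: "1 - s < exp v" using s2 by simp
    have "exp v < exp (ln (1 + s))" using u unfolding s_def by simp
    then have e2: "exp v < 1 + s" using s0 by simp
    define x where "x = exp v - 1"
    have xs: "\<bar>x\<bar> < s" using e1 e2 unfolding x_def by auto
    define b where "b = (2 * q - h ^ z) / (1 - 2 * q)"
    have hzz: "0 < h^z" "h^z \<le> h" using hz[OF z] by auto
    have b0: "0 \<le> b" using hzz hq q2 unfolding b_def by simp
    have b1: "b \<le> 1/(1-2*q)" using hzz q2 assms unfolding b_def by (simp add: divide_right_mono)
    have xq: "\<bar>x\<bar>/(1-2*q) < 1" using xs s1 q2 by (simp add: divide_less_eq)
    have "b*x \<le> b*\<bar>x\<bar>" using b0 by (simp add: mult_left_mono)
    also have "\<dots> \<le> (1/(1-2*q))*\<bar>x\<bar>" using b1 by (intro mult_right_mono) auto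
    also have "\<dots> = \<bar>x\<bar>/(1-2*q)" by simp
    finally have den: "1 - \<bar>x\<bar>/(1-2*q) \<le> 1 - b*x" by simp
    have dpos: "0 < 1 - \<bar>x\<bar>/(1-2*q)" using xq by simp
    have num: "exp v \<le> 1 + \<bar>x\<bar>" unfolding x_def by simp
    have "psi p q z v = exp v / (1 - b*x)" unfolding psi_def h_def[symmetric] b_def x_def by simp
    also have "\<dots> \<le> (1 + \<bar>x\<bar>) / (1 - b*x)" using num den dpos
      by (intro divide_right_mono) auto
    also have "\<dots> \<le> (1 + \<bar>x\<bar>) / (1 - \<bar>x\<bar>/(1-2*q))" using den dpos
      by (intro divide_left_mono) auto
    finally show "psi p q z v \<le> (1 + \<bar>exp v - 1\<bar>) / (1 - \<bar>exp v - 1\<bar> / (1 - 2*q))"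
      unfolding x_def .
  qed
  have dpos: "\<delta> > 0" using B0 M0 unfolding \<delta>_def by simp
  show ?thesis
    apply (rule conjI)
     apply (rule exI[of _ "4*K"], rule exI[of _ \<delta>])
     apply (rule conjI, rule dpos, rule part1)
    by (rule part2)
qed

end
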